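(* For every prime $p$ and every integer $k$ with $1\le k\le p$, \[ \overline{M}_k(p)=p\,f_k(p)-f_k(1)+\sum_{j=2}^{p} f_k\!\left(\left\lfloor \frac{p}{j}\right\rfloor\right). \]
   Context: For a nonempty finite set $A$ of positive integers, $(A)$ denotes the greatest common divisor of the elements of $A$. For $m,k\in\mathbb{N}$, $f_k(m)$ is the number of $k$-element subsets $A\subseteq\{1,2,\ldots,m\}$ with $(A)=1$ (so $f_k(m)=0$ if $m<k$). For $1\le k\le n$, \[ \overline{M}_k(n)=\sum_{\substack{A\subseteq\{1,\ldots,n\},\ \#A=k\\ \gcd((A),n)=1}}\gcd((A)-1,n), \] with the convention $\gcd(0,n)=n$. *)

theory Defs
  imports "HOL-Number_Theory.Number_Theory"
begin

definition f :: "nat \<Rightarrow> nat \<Rightarrow> nat" where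
  "f k m = card {A. A \<subseteq> {1..m} \<and> card A = k \<and> Gcd A = 1}"

definition Mbar :: "nat \<Rightarrow> nat \<Rightarrow> nat" where
  "Mbar k n = (\<Sum>A\<in>{A. A \<subseteq> {1..n} \<and> card A = k \<and> coprime (Gcd A) n}.
                  gcd (Gcd A - 1) n)"

end

theory Submission
  imports Defs
begin

definition G :: "nat \<Rightarrow> nat \<Rightarrow> nat \<Rightarrow> nat set set" where
  "G n k d = {A. A \<subseteq> {1..n} \<and> card A = k \<and> Gcd A = d}"

lemma G_finite: "finite (G n k d)"
  by (rule finite_subset[of _ "Pow {1..n}"]) (auto simp: G_def)

lemma card_G:
  assumes d: "d > 0"
  shows "card (G n k d) = f k (n div d)"
proof -
  let ?B = "{B. B \<subseteq> {1..n div d} \<and> card B = k \<and> Gcd B = 1}"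
  have inj: "inj_on (\<lambda>B. (*) d ` B) X" for X :: "nat set set"
    by (rule inj_onI) (use d in \<open>auto simp: inj_image_eq_iff inj_on_def\<close>)
  have eq: "G n k d = (\<lambda>B. (*) d ` B) ` ?B"
  proof
    show "(\<lambda>B. (*) d ` B) ` ?B \<subseteq> G n k d"
    proof
      fix A assume "A \<in> (\<lambda>B. (*) d ` B) ` ?B"
      then obtain B where B: "B \<in> ?B" and A: "A = (*) d ` B" by blast
      have "A \<subseteq> {1..n}"
      proof
        fix y assume "y \<in> A"
        then obtain x where x: "x \<in> B" "y = d * x" using A by blast
        have "x \<ge> 1" "x \<le> n div d" using B x by auto
        hence "d * x \<le> d * (n div d)" by simp
        also have "\<dots> \<le> n" by simp
        finally show "y \<in> {1..n}" using x d \<open>x \<ge> 1\<close> by simp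
      qed
      moreover have "card A = k" using B A d by (simp add: card_image inj_on_def)
      moreover have "Gcd A = d" using B A by (simp add: Gcd_mult)
      ultimately show "A \<in> G n k d" by (simp add: G_def)
    qed
  next
    show "G n k d \<subseteq> (\<lambda>B. (*) d ` B) ` ?B"
    proof
      fix A assume A: "A \<in> G n k d"
      have dv: "\<forall>x\<in>A. d dvd x" using A by (auto simp: G_def)
      define B where "B = (\<lambda>x. x div d) ` A"
      have AB: "A = (*) d ` B"
        unfolding B_def image_image using dv by (auto simp: image_iff)
      have "B \<subseteq> {1..n div d}"
      proof
        fix y assume "y \<in> B"
        then obtain x where x: "x \<in> A" "y = x div d" unfolding B_def by blast
        have "x \<ge> 1" "x \<le> n" using A x by (auto simp: G_def)
        moreover have "d dvd x" using dv x by blast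
        ultimately have "x div d \<ge> 1" using d
          by (metis dvd_div_eq_0_iff less_one not_less not_one_le_zero)
        moreover have "x div d \<le> n div d" using \<open>x \<le> n\<close> by (simp add: div_le_mono)
        ultimately show "y \<in> {1..n div d}" using x by simp
      qed
      moreover have "card B = k"
      proof -
        have "card A = card B" using AB d by (simp add: card_image inj_on_def)
        thus ?thesis using A by (simp add: G_def)
      qed
      moreover have "Gcd B = 1"
      proof -
        have "d = Gcd A" using A by (simp add: G_def)
        also have "\<dots> = d * Gcd B" using AB by (simp add: Gcd_mult)
        finally show ?thesis using d by simp
      qed
      ultimately show "A \<in> (\<lambda>B. (*) d ` B) ` ?B" using AB by blast
    qed
  qed
  show ?thesis unfolding eq f_def by (rule card_image[OF inj])
qed

lemma Gcd_range:
  fixes A :: "nat set" and n k :: nat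
  assumes "A \<subseteq> {1..n}" "card A = k" "k \<ge> 1"
  shows "Gcd A \<ge> 1 \<and> Gcd A \<le> n"
proof -
  have "A \<noteq> {}" using assms by auto
  then obtain x where x: "x \<in> A" by blast
  have "x \<ge> 1" "x \<le> n" using x assms by auto
  have "Gcd A dvd x" using x by (simp add: Gcd_dvd)
  hence "Gcd A \<le> x" using \<open>x \<ge> 1\<close> by (simp add: dvd_imp_le)
  moreover have "Gcd A \<noteq> 0" using x \<open>x \<ge> 1\<close> by (auto simp: Gcd_0_iff)
  ultimately show ?thesis using \<open>x \<le> n\<close> by linarith
qed

theorem mainTheorem6:
  fixes p k :: nat
  assumes "prime p" and "1 \<le> k" and "k \<le> p"
  shows "int (Mbar k p) = int p * int (f k p) - int (f k 1)
           + (\<Sum>j=2..p. int (f k (p div j)))"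
proof -
  have p2: "p \<ge> 2" using assms(1) by (simp add: prime_ge_2_nat)
  let ?S = "{A. A \<subseteq> {1..p} \<and> card A = k \<and> coprime (Gcd A) p}"
  let ?h = "\<lambda>A. gcd (Gcd A - 1) p"
  have S: "?S = (\<Union>d\<in>{1..<p}. G p k d)"
  proof (rule equalityI; rule subsetI)
    fix A assume A: "A \<in> ?S"
    have r: "Gcd A \<ge> 1 \<and> Gcd A \<le> p" using Gcd_range[of A p k] A assms by auto
    have "Gcd A \<noteq> p" using A p2 by auto
    thus "A \<in> (\<Union>d\<in>{1..<p}. G p k d)" using A r by (auto simp: G_def)
  next
    fix A assume "A \<in> (\<Union>d\<in>{1..<p}. G p k d)"
    then obtain d where d: "d \<in> {1..<p}" "A \<in> G p k d" by blast
    have "\<not> p dvd d" using d by (auto dest: dvd_imp_le)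
    hence "coprime p d" by (rule prime_imp_coprime[OF assms(1)])
    thus "A \<in> ?S" using d by (auto simp: G_def coprime_commute)
  qed
  have "Mbar k p = (\<Sum>A\<in>(\<Union>d\<in>{1..<p}. G p k d). ?h A)"
    unfolding Mbar_def S ..
  also have "\<dots> = (\<Sum>d\<in>{1..<p}. \<Sum>A\<in>G p k d. ?h A)"
    by (rule sum.UNION_disjoint) (auto simp: G_finite G_def)
  also have "\<dots> = (\<Sum>d\<in>{1..<p}. (if d = 1 then p else 1) * f k (p div d))"
  proof (rule sum.cong[OF refl])
    fix d assume d: "d \<in> {1..<p}"
    have "(\<Sum>A\<in>G p k d. ?h A) = (\<Sum>A\<in>G p k d. (if d = 1 then p else 1))"
    proof (rule sum.cong[OF refl])
      fix A assume "A \<in> G p k d"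
      hence g: "Gcd A = d" by (simp add: G_def)
      show "?h A = (if d = 1 then p else 1)"
      proof (cases "d = 1")
        case True thus ?thesis using g by simp
      next
        case False
        have "\<not> p dvd (d - 1)" using d False by (auto dest: dvd_imp_le)
        hence "coprime p (d - 1)" by (rule prime_imp_coprime[OF assms(1)])
        thus ?thesis using g False by (simp add: coprime_commute)
      qed
    qed
    also have "\<dots> = (if d = 1 then p else 1) * card (G p k d)" by simp
    also have "\<dots> = (if d = 1 then p else 1) * f k (p div d)" using d card_G by simp
    finally show "(\<Sum>A\<in>G p k d. ?h A) = (if d = 1 then p else 1) * f k (p div d)" .
  qed
  also have "\<dots> = p * f k p + (\<Sum>d\<in>{2..<p}. f k (p div d))"
  proof -
    have "{1..<p} = insert 1 {2..<p}" using p2 by auto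
    thus ?thesis by (simp add: sum.insert)
  qed
  finally have M: "Mbar k p = p * f k p + (\<Sum>d\<in>{2..<p}. f k (p div d))" .
  have "{2..p} = insert p {2..<p}" using p2 by auto
  hence "(\<Sum>j=2..p. int (f k (p div j))) = int (f k 1) + (\<Sum>j\<in>{2..<p}. int (f k (p div j)))"
    using p2 by (simp add: sum.insert)
  thus ?thesis using M by simp
qed

end
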